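(* For any rooted tree $t=B_+(t_1\cdots t_n)$ and any integer $s\ge0$, $$C_s(t)=\sum_{j=0}^{s}\ \sum_{\substack{r_1+\cdots+r_n=s-j\\ r_1,\ldots,r_n\ge0}}\mathrm{qsh}\big(|t_1|-r_1,\ldots,|t_n|-r_n;\,j\big)\,C_{r_1}(t_1)\cdots C_{r_n}(t_n),$$ where terms with some $r_i\ge|t_i|$ vanish since then $C_{r_i}(t_i)=0$. In particular $C_0(t)=\frac{|t|!}{t!}$, and for the generalized corolla $\mathcal C_{k_1,\ldots,k_n}=B_+(E_{k_1}\cdots E_{k_n})$ one has $C_s(\mathcal C_{k_1,\ldots,k_n})=\mathrm{qsh}(k_1,\ldots,k_n;s)$.
   Context: Let $k$ be a field of characteristic $0$. Rooted trees are finite, non-planar; $|t|$ is the number of vertices of $t$; $B_+(t_1\cdots t_n)$ joins the roots of $t_1,\dots,t_n$ to a new root. The tree factorial: $\bullet!=1$ for the one-vertex tree, $B_+(t_1\cdots t_n)!=|B_+(t_1\cdots t_n)|\prod_jt_j!$. $E_j$ denotes the ladder with $j$ vertices (a chain rooted at an end). $\mathcal H_{CK}$ is the free commutative algebra on nonempty rooted trees; $\mathcal A=k[x]$ carries the quasi-shuffle product $\diamond$ determined by $\mathbf 1\diamond u=u\diamond\mathbf 1=u$ and $x^k\diamond x^l=(x^{k-1}\diamond x^l)x+(x^k\diamond x^{l-1})x+(x^{k-1}\diamond x^{l-1})x$ ($k,l\ge1$). $\Lambda:\mathcal H_{CK}\to\mathcal A$ is the unique unital algebra morphism with $\Lambda(B_+(t_1\cdots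 t_n))=(\Lambda(t_1)\diamond\cdots\diamond\Lambda(t_n))x$. For a nonempty tree $t$, $C_s(t)$ denotes the coefficient of $x^{|t|-s}$ in $\Lambda(t)$ (zero if $|t|-s\le0$ or $s<0$). For nonnegative integers $k_1,\ldots,k_n$ with $K=k_1+\cdots+k_n$ and $r\ge0$, $\mathrm{qsh}(k_1,\ldots,k_n;r)$ is the number of surjective maps $\pi:\{1,\ldots,K\}\to\{1,\ldots,K-r\}$ that are strictly increasing on each block $\{k_1+\cdots+k_j+1,\ldots,k_1+\cdots+k_{j+1}\}$, $j=0,\ldots,n-1$ (equivalently, the coefficient of $x^{K-r}$ in $x^{k_1}\diamond\cdots\diamond x^{k_n}$). *)

theory Defs
  imports "HOL-Computational_Algebra.Polynomial" "HOL-Library.FuncSet"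
begin

text \<open>A tree is a root together with the (unordered) collection of its
  subtrees; we represent the collection by a list. All notions below are invariant
  under permuting that list, so this models non-planar rooted trees.
  B_+(t_1 ... t_n) is Node [t_1, ..., t_n].\<close>
datatype tree = Node "tree list"

fun tsize :: "tree \<Rightarrow> nat" where
  "tsize (Node ts) = 1 + sum_list (map tsize ts)"

fun tfact :: "tree \<Rightarrow> nat" where
  "tfact (Node ts) = tsize (Node ts) * prod_list (map tfact ts)"

text \<open>Ladder E_j with j vertices (j >= 1).\<close>
fun ladder :: "nat \<Rightarrow> tree" where
  "ladder 0 = Node []"
| "ladder (Suc 0) = Node []"
| "ladder (Suc (Suc n)) = Node [ladder (Suc n)]"

text \<open>Quasi-shuffle of monomials x^k \<diamond> x^l in k[x].\<close>
fun qmono :: "nat \<Rightarrow> nat \<Rightarrow> 'a::comm_ring_1 poly" where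
  "qmono 0 l = monom 1 l"
| "qmono (Suc k) 0 = monom 1 (Suc k)"
| "qmono (Suc k) (Suc l) =
     (qmono k (Suc l) + qmono (Suc k) l + qmono k l) * [:0, 1:]"

definition qshuffle :: "'a::comm_ring_1 poly \<Rightarrow> 'a poly \<Rightarrow> 'a poly" where
  "qshuffle p q = (\<Sum>i\<le>degree p. \<Sum>j\<le>degree q. smult (coeff p i * coeff q j) (qmono i j))"

fun Lam :: "tree \<Rightarrow> 'a::comm_ring_1 poly" where
  "Lam (Node ts) = foldr qshuffle (map Lam ts) 1 * [:0, 1:]"

definition Ccoef :: "nat \<Rightarrow> tree \<Rightarrow> 'a::comm_ring_1" where
  "Ccoef s t = (if s < tsize t then coeff (Lam t) (tsize t - s) else 0)"

definition qblock :: "nat list \<Rightarrow> nat \<Rightarrow> nat set" where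
  "qblock ks j = {sum_list (take j ks) + 1 .. sum_list (take (Suc j) ks)}"

definition qsh :: "nat list \<Rightarrow> nat \<Rightarrow> nat" where
  "qsh ks r = (let K = sum_list ks in
     if r \<le> K then
       card {\<pi> \<in> {1..K} \<rightarrow>\<^sub>E {1..K - r}. \<pi> ` {1..K} = {1..K - r} \<and>
                 (\<forall>j < length ks. strict_mono_on (qblock ks j) \<pi>)}
     else 0)"

end

theory Submission
  imports Defs "HOL-Library.Infinite_Set"
begin

definition phi :: "'a::comm_ring_1 poly \<Rightarrow> nat \<Rightarrow> 'a" where
  "phi p m = (\<Sum>k\<le>degree p. coeff p k * of_nat (m choose k))"

lemma phi_bound:
  assumes "degree p \<le> D"
  shows "phi p m = (\<Sum>k\<le>D. coeff p k * of_nat (m choose k))"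
  unfolding phi_def
  by (rule sum.mono_neutral_left) (use assms in \<open>auto simp: coeff_eq_0\<close>)

lemma phi_add: "phi (p + q) m = phi p m + phi q m"
proof -
  let ?D = "max (degree p) (degree q)"
  have "degree (p+q) \<le> ?D" by (rule degree_add_le) auto
  then show ?thesis
    by (simp add: phi_bound[of _ ?D] phi_bound[of p ?D] phi_bound[of q ?D] sum.distrib distrib_right)
qed

lemma phi_0[simp]: "phi 0 m = 0" by (simp add: phi_def)

lemma phi_sum: "phi (\<Sum>x\<in>A. f x) m = (\<Sum>x\<in>A. phi (f x) m)"
  by (induction A rule: infinite_finite_induct) (auto simp: phi_add)

lemma phi_smult: "phi (smult c p) m = c * phi p m"
proof -
  have "phi (smult c p) m = (\<Sum>k\<le>degree p. coeff (smult c p) k * of_nat (m choose k))"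
    by (rule phi_bound) (simp add: degree_smult_le)
  then show ?thesis by (simp add: phi_def[of p] sum_distrib_left mult.assoc)
qed

lemma phi_monom: "phi (monom 1 n) m = of_nat (m choose n)"
proof -
  have "phi (monom 1 n) m = (\<Sum>k\<le>n. coeff (monom 1 n) k * of_nat (m choose k))"
    by (rule phi_bound) (simp add: degree_monom_le)
  also have "\<dots> = (\<Sum>k\<in>{n}. coeff (monom 1 n) k * of_nat (m choose k))"
    by (rule sum.mono_neutral_right) (auto simp: coeff_monom)
  finally show ?thesis by simp
qed

lemma phi_one[simp]: "phi 1 m = 1"
  by (metis monom_eq_1 phi_monom binomial_n_0 of_nat_1)

lemma times_x: "(p::'a::comm_ring_1 poly) * [:0,1:] = pCons 0 p" by (simp add: mult_pCons_right)

lemma phi_x: "phi (p * [:0,1:]) m = (\<Sum>k\<le>degree p. coeff p k * of_nat (m choose Suc k))"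
proof -
  have "degree (pCons 0 p) \<le> Suc (degree p)" by (simp add: degree_pCons_le)
  then have "phi (pCons 0 p) m = (\<Sum>k\<le>Suc (degree p). coeff (pCons 0 p) k * of_nat (m choose k))"
    by (rule phi_bound)
  also have "\<dots> = (\<Sum>k\<le>degree p. coeff p k * of_nat (m choose Suc k))"
    by (simp only: sum.atMost_Suc_shift) simp
  finally show ?thesis unfolding times_x .
qed

lemma phi_x_0: "phi (p * [:0,1:]) 0 = 0"
  unfolding phi_x by simp

lemma phi_x_Suc: "phi (p * [:0,1:]) (Suc m) = phi (p * [:0,1:]) m + phi p m"
  unfolding phi_x phi_def[of p] binomial_Suc_Suc of_nat_add distrib_left sum.distrib by simp

lemma phi_qmono: "phi (qmono k l :: 'a::comm_ring_1 poly) m = of_nat (m choose k) * of_nat (m choose l)"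
proof (induction k l arbitrary: m rule: qmono.induct)
  case (1 l) then show ?case by (simp add: phi_monom)
next
  case (2 k) then show ?case by (simp add: phi_monom)
next
  case (3 k l)
  show ?case
  proof (induction m)
    case 0 then show ?case by (simp only: qmono.simps phi_x_0) simp
  next
    case (Suc m)
    have IH: "phi ((qmono k (Suc l) + qmono (Suc k) l + qmono k l) * [:0,1:] :: 'a poly) m
       = of_nat (m choose Suc k) * of_nat (m choose Suc l)"
      using Suc by (simp only: qmono.simps)
    show ?case
      by (simp only: qmono.simps phi_x_Suc IH phi_add 3 binomial_Suc_Suc of_nat_add) (simp add: algebra_simps)
  qed
qed

lemma phi_qshuffle: "phi (qshuffle p q) m = phi p m * phi q m"
  by (simp add: qshuffle_def phi_sum phi_smult phi_qmono phi_def[of p] phi_def[of q] sum_product mult_ac)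

lemma phi_zero_imp:
  assumes "\<And>m. phi p m = 0" shows "p = 0"
proof -
  have "coeff p n = 0" for n
  proof (induction n rule: less_induct)
    case (less n)
    let ?D = "max (degree p) n"
    have "0 = phi p n" using assms by simp
    also have "\<dots> = (\<Sum>k\<le>?D. coeff p k * of_nat (n choose k))" by (rule phi_bound) simp
    also have "\<dots> = coeff p n"
    proof -
      have "(\<Sum>k\<le>?D. coeff p k * of_nat (n choose k)) = (\<Sum>k\<in>{n}. coeff p k * of_nat (n choose k))"
        by (rule sum.mono_neutral_right) (auto, metis less linorder_neqE_nat binomial_eq_0 mult_zero_left mult_zero_right of_nat_0)
      then show ?thesis by simp
    qed
    finally show ?case by simp
  qed
  then show ?thesis by (simp add: poly_eqI)
qed

lemma phi_diff: "phi (p - q) m = phi p m - phi q m"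
  using phi_add[of "p - q" q m] by (simp add: algebra_simps)

lemma phi_inj: assumes "\<And>m. phi p m = phi q m" shows "p = q"
  using phi_zero_imp[of "p - q"] assms by (simp add: phi_diff)

lemma strict_mono_unique:
  fixes f g :: "nat \<Rightarrow> nat"
  assumes "finite B" "strict_mono_on B f" "strict_mono_on B g" "f ` B = g ` B" "x \<in> B"
  shows "f x = g x"
proof -
  let ?L = "sorted_list_of_set B"
  have sL: "sorted_wrt (<) ?L" by (rule strict_sorted_list_of_set)
  have setL: "set ?L = B" using assms(1) by simp
  have sf: "sorted_wrt (<) (map f ?L)"
    unfolding sorted_wrt_map
    by (rule sorted_wrt_mono_rel[OF _ sL]) (use assms(2) setL in \<open>auto dest: strict_mono_onD\<close>)
  have sg: "sorted_wrt (<) (map g ?L)"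
    unfolding sorted_wrt_map
    by (rule sorted_wrt_mono_rel[OF _ sL]) (use assms(3) setL in \<open>auto dest: strict_mono_onD\<close>)
  have "map f ?L = map g ?L"
    by (rule strict_sorted_equal[OF sg sf]) (simp add: setL assms(4))
  then show ?thesis using assms(5) setL by (auto simp: map_eq_conv)
qed

lemma enum_iso:
  fixes S :: "nat set"
  assumes "finite S" "card S = k"
  shows "strict_mono_on {a+1..a+k} (\<lambda>x. enumerate S (x-a-1))"
    and "(\<lambda>x. enumerate S (x-a-1)) ` {a+1..a+k} = S"
proof -
  show "strict_mono_on {a+1..a+k} (\<lambda>x. enumerate S (x-a-1))"
    by (rule strict_mono_onI) (use assms in \<open>auto intro!: finite_enumerate_mono\<close>)
  show "(\<lambda>x. enumerate S (x-a-1)) ` {a+1..a+k} = S"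
  proof
    show "(\<lambda>x. enumerate S (x-a-1)) ` {a+1..a+k} \<subseteq> S"
      using assms by (auto intro!: finite_enumerate_in_set)
    show "S \<subseteq> (\<lambda>x. enumerate S (x-a-1)) ` {a+1..a+k}"
    proof
      fix s assume "s \<in> S"
      then obtain n where n: "n < card S" "enumerate S n = s"
        using finite_enumerate_Ex[OF assms(1)] by blast
      then show "s \<in> (\<lambda>x. enumerate S (x-a-1)) ` {a+1..a+k}"
        using assms by (intro image_eqI[of _ _ "n+a+1"]) auto
    qed
  qed
qed

definition MO :: "nat \<Rightarrow> nat \<Rightarrow> nat set \<Rightarrow> (nat \<Rightarrow> nat) set" where
  "MO a k T = {f \<in> {a+1..a+k} \<rightarrow>\<^sub>E T. strict_mono_on {a+1..a+k} f}"

lemma card_MO: "card (MO a k {1..m}) = m choose k"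
proof -
  let ?B = "{a+1..a+k}"
  have "card (MO a k {1..m}) = card ((\<lambda>f. f ` ?B) ` MO a k {1..m})"
  proof (rule card_image[symmetric], rule inj_onI)
    fix f g assume f: "f \<in> MO a k {1..m}" and g: "g \<in> MO a k {1..m}" and e: "f ` ?B = g ` ?B"
    show "f = g"
    proof (rule extensionalityI[of _ ?B])
      show "f \<in> extensional ?B" "g \<in> extensional ?B" using f g by (auto simp: MO_def PiE_def)
      fix x assume "x \<in> ?B"
      then show "f x = g x" using f g e by (intro strict_mono_unique[of ?B]) (auto simp: MO_def)
    qed
  qed
  also have "(\<lambda>f. f ` ?B) ` MO a k {1..m} = {S. S \<subseteq> {1..m} \<and> card S = k}"
  proof
    show "(\<lambda>f. f ` ?B) ` MO a k {1..m} \<subseteq> {S. S \<subseteq> {1..m} \<and> card S = k}"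
    proof clarify
      fix f assume f: "f \<in> MO a k {1..m}"
      then have "inj_on f ?B" by (auto simp: MO_def intro: strict_mono_on_imp_inj_on)
      then show "f ` ?B \<subseteq> {1..m} \<and> card (f ` ?B) = k"
        using f by (auto simp: MO_def card_image PiE_def Pi_def)
    qed
    show "{S. S \<subseteq> {1..m} \<and> card S = k} \<subseteq> (\<lambda>f. f ` ?B) ` MO a k {1..m}"
    proof
      fix S assume "S \<in> {S. S \<subseteq> {1..m} \<and> card S = k}"
      then have S: "S \<subseteq> {1..m}" "card S = k" by auto
      then have fS: "finite S" using finite_subset by blast
      let ?f = "restrict (\<lambda>x. enumerate S (x-a-1)) ?B"
      have im: "?f ` ?B = S" using enum_iso(2)[OF fS S(2), of a] by auto
      have sm: "strict_mono_on ?B ?f" using enum_iso(1)[OF fS S(2), of a]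
        by (auto simp: strict_mono_on_def)
      have "?f \<in> MO a k {1..m}" unfolding MO_def using im sm S(1) by auto
      then show "S \<in> (\<lambda>f. f ` ?B) ` MO a k {1..m}" using im by (intro image_eqI[of _ _ ?f]) auto
    qed
  qed
  also have "card {S. S \<subseteq> {1..m} \<and> card S = k} = m choose k" by (simp add: n_subsets)
  finally show ?thesis .
qed

definition MF :: "nat list \<Rightarrow> nat set \<Rightarrow> (nat \<Rightarrow> nat) set" where
  "MF ks T = {\<pi> \<in> {1..sum_list ks} \<rightarrow>\<^sub>E T. \<forall>j<length ks. strict_mono_on (qblock ks j) \<pi>}"

lemma sum_list_take_le: "sum_list (take n xs) \<le> (sum_list xs :: nat)"
  by (metis append_take_drop_id sum_list_append le_add1)

lemma qblock_sub: "j < length ks \<Longrightarrow> qblock ks j \<subseteq> {1..sum_list ks}"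
  unfolding qblock_def using sum_list_take_le[of "Suc j" ks] by auto

lemma qblock_snoc1: "j < length ks \<Longrightarrow> qblock (ks @ [k]) j = qblock ks j"
  unfolding qblock_def by simp

lemma qblock_snoc2: "qblock (ks @ [k]) (length ks) = {sum_list ks + 1..sum_list ks + k}"
  unfolding qblock_def by simp

lemma strict_mono_on_cong': "(\<And>x. x \<in> A \<Longrightarrow> f x = g x) \<Longrightarrow> strict_mono_on A f = strict_mono_on A g"
  by (auto simp: strict_mono_on_def)

lemma card_MF: "card (MF ks {1..m}) = prod_list (map (\<lambda>k. m choose k) ks)"
proof (induction ks rule: rev_induct)
  case Nil
  then show ?case by (simp add: MF_def)
next
  case (snoc k ks)
  let ?K = "sum_list ks"
  let ?B = "{?K+1..?K+k}"
  let ?\<Phi> = "\<lambda>\<pi>::nat\<Rightarrow>nat. (restrict \<pi> {1..?K}, restrict \<pi> ?B)"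
  let ?\<Psi> = "\<lambda>(f,g). (\<lambda>x::nat. if x \<in> {1..?K} then f x else g x)"
  have sub: "\<And>j. j < length ks \<Longrightarrow> qblock ks j \<subseteq> {1..?K}" by (rule qblock_sub)
  have "bij_betw ?\<Phi> (MF (ks@[k]) {1..m}) (MF ks {1..m} \<times> MO ?K k {1..m})"
  proof (rule bij_betw_byWitness[where f' = ?\<Psi>])
    show "\<forall>a\<in>MF (ks @ [k]) {1..m}. ?\<Psi> (?\<Phi> a) = a"
    proof
      fix a assume a: "a \<in> MF (ks @ [k]) {1..m}"
      show "?\<Psi> (?\<Phi> a) = a"
      proof
        fix x show "?\<Psi> (?\<Phi> a) x = a x"
          using a by (cases "x \<in> {1..?K+k}") (auto simp: MF_def PiE_def extensional_def)
      qed
    qed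
    show "\<forall>a'\<in>MF ks {1..m} \<times> MO ?K k {1..m}. ?\<Phi> (?\<Psi> a') = a'"
    proof
      fix a' assume a': "a' \<in> MF ks {1..m} \<times> MO ?K k {1..m}"
      obtain f g where fg: "a' = (f,g)" by (cases a')
      have "restrict (?\<Psi> (f,g)) {1..?K} = f"
        using a' fg by (auto simp: MF_def PiE_def extensional_def restrict_def)
      moreover have "restrict (?\<Psi> (f,g)) ?B = g"
        using a' fg by (auto simp: MO_def PiE_def extensional_def restrict_def)
      ultimately show "?\<Phi> (?\<Psi> a') = a'" using fg by simp
    qed
    show "?\<Phi> ` MF (ks @ [k]) {1..m} \<subseteq> MF ks {1..m} \<times> MO ?K k {1..m}"
    proof (rule image_subsetI)
      fix a assume a: "a \<in> MF (ks @ [k]) {1..m}"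
      have 1: "restrict a {1..?K} \<in> MF ks {1..m}"
        unfolding MF_def
      proof (intro CollectI conjI allI impI)
        show "restrict a {1..?K} \<in> {1..?K} \<rightarrow>\<^sub>E {1..m}" using a by (auto simp: MF_def)
        fix j assume j: "j < length ks"
        have "strict_mono_on (qblock ks j) a"
          using a j qblock_snoc1[OF j, of k] unfolding MF_def
          by (metis (no_types, lifting) mem_Collect_eq less_SucI length_append_singleton)
        then show "strict_mono_on (qblock ks j) (restrict a {1..?K})"
          using sub[OF j] by (subst strict_mono_on_cong'[where g = a]) auto
      qed
      have 2: "restrict a ?B \<in> MO ?K k {1..m}"
        unfolding MO_def
      proof (intro CollectI conjI allI impI)
        show "restrict a ?B \<in> ?B \<rightarrow>\<^sub>E {1..m}" using a by (auto simp: MF_def)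
        have "strict_mono_on ?B a"
          using a qblock_snoc2[of ks k] by (auto simp: MF_def)
        then show "strict_mono_on ?B (restrict a ?B)"
          by (subst strict_mono_on_cong'[where g = a]) auto
      qed
      show "?\<Phi> a \<in> MF ks {1..m} \<times> MO ?K k {1..m}" using 1 2 by simp
    qed
    show "?\<Psi> ` (MF ks {1..m} \<times> MO ?K k {1..m}) \<subseteq> MF (ks @ [k]) {1..m}"
    proof (rule image_subsetI)
      fix p assume "p \<in> MF ks {1..m} \<times> MO ?K k {1..m}"
      then obtain f g where p: "p = (f,g)" and f: "f \<in> MF ks {1..m}" and g: "g \<in> MO ?K k {1..m}"
        by (cases p) auto
      show "?\<Psi> p \<in> MF (ks @ [k]) {1..m}"
        unfolding MF_def p
      proof (intro CollectI conjI allI impI)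
        show "?\<Psi> (f,g) \<in> {1..sum_list (ks @ [k])} \<rightarrow>\<^sub>E {1..m}"
          using f g by (auto simp: MF_def MO_def PiE_def Pi_def extensional_def)
        fix j assume j: "j < length (ks @ [k])"
        show "strict_mono_on (qblock (ks @ [k]) j) (?\<Psi> (f,g))"
        proof (cases "j < length ks")
          case True
          have "strict_mono_on (qblock ks j) f" using f True by (auto simp: MF_def)
          then show ?thesis using sub[OF True] qblock_snoc1[OF True, of k]
            by (subst strict_mono_on_cong'[where g = f]) auto
        next
          case False
          then have jj: "j = length ks" using j by simp
          have "strict_mono_on ?B g" using g by (auto simp: MO_def)
          then show ?thesis unfolding jj qblock_snoc2
            by (subst strict_mono_on_cong'[where g = g]) auto
        qed
      qed
    qed
  qed
  then have "card (MF (ks@[k]) {1..m}) = card (MF ks {1..m} \<times> MO ?K k {1..m})"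
    by (rule bij_betw_same_card)
  also have "\<dots> = card (MF ks {1..m}) * (m choose k)" by (simp only: card_cartesian_product card_MO)
  finally show ?case using snoc.IH by simp
qed

definition SJ :: "nat list \<Rightarrow> nat \<Rightarrow> (nat \<Rightarrow> nat) set" where
  "SJ ks M = {\<pi> \<in> MF ks {1..M}. \<pi> ` {1..sum_list ks} = {1..M}}"

lemma card_FU:
  assumes U: "U \<subseteq> {1..m}"
  shows "card {\<pi> \<in> MF ks {1..m}. \<pi> ` {1..sum_list ks} = U} = card (SJ ks (card U))"
proof -
  let ?D = "{1..sum_list ks}"
  let ?M = "card U"
  have fU: "finite U" using U finite_subset by blast
  define h where "h = (\<lambda>x. enumerate U (x - 1))"
  have hsm: "strict_mono_on {1..?M} h"
    using enum_iso(1)[OF fU refl, of 0] by (simp add: h_def)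
  have him: "h ` {1..?M} = U"
    using enum_iso(2)[OF fU refl, of 0] by (simp add: h_def)
  have hinj: "inj_on h {1..?M}" using hsm by (rule strict_mono_on_imp_inj_on)
  define hi where "hi = the_inv_into {1..?M} h"
  have h1: "\<And>i. i \<in> {1..?M} \<Longrightarrow> hi (h i) = i" unfolding hi_def using hinj by (simp add: the_inv_into_f_f)
  have h2: "\<And>u. u \<in> U \<Longrightarrow> h (hi u) = u" unfolding hi_def using hinj him by (metis f_the_inv_into_f)
  have h3: "\<And>u. u \<in> U \<Longrightarrow> hi u \<in> {1..?M}" unfolding hi_def using hinj him by (metis the_inv_into_into subset_refl)
  have h4: "\<And>i. i \<in> {1..?M} \<Longrightarrow> h i \<in> U" using him by blast
  have hism: "strict_mono_on U hi"
  proof (rule strict_mono_onI)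
    fix u v assume "u \<in> U" "v \<in> U" "u < v"
    then show "hi u < hi v" using strict_mono_on_less[OF hsm h3 h3, of u v] h2 by simp
  qed
  have blocks: "\<And>j. j < length ks \<Longrightarrow> qblock ks j \<subseteq> ?D" by (rule qblock_sub)
  let ?\<Phi> = "\<lambda>\<pi>. restrict (h \<circ> \<pi>) ?D"
  let ?\<Psi> = "\<lambda>\<sigma>. restrict (hi \<circ> \<sigma>) ?D"
  have "bij_betw ?\<Phi> (SJ ks ?M) {\<pi> \<in> MF ks {1..m}. \<pi> ` ?D = U}"
  proof (rule bij_betw_byWitness[where f' = ?\<Psi>])
    show "\<forall>a\<in>SJ ks ?M. ?\<Psi> (?\<Phi> a) = a"
    proof
      fix a assume a: "a \<in> SJ ks ?M"
      show "?\<Psi> (?\<Phi> a) = a"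
      proof
        fix x show "?\<Psi> (?\<Phi> a) x = a x"
          using a h1 by (cases "x \<in> ?D") (auto simp: SJ_def MF_def PiE_def extensional_def Pi_def)
      qed
    qed
    show "\<forall>a\<in>{\<pi> \<in> MF ks {1..m}. \<pi> ` ?D = U}. ?\<Phi> (?\<Psi> a) = a"
    proof
      fix a assume a: "a \<in> {\<pi> \<in> MF ks {1..m}. \<pi> ` ?D = U}"
      show "?\<Phi> (?\<Psi> a) = a"
      proof
        fix x show "?\<Phi> (?\<Psi> a) x = a x"
          using a h2 by (cases "x \<in> ?D") (auto simp: MF_def PiE_def extensional_def)
      qed
    qed
    show "?\<Phi> ` SJ ks ?M \<subseteq> {\<pi> \<in> MF ks {1..m}. \<pi> ` ?D = U}"
    proof (rule image_subsetI)
      fix a assume a: "a \<in> SJ ks ?M"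
      have am: "\<And>x. x \<in> ?D \<Longrightarrow> a x \<in> {1..?M}" using a by (auto simp: SJ_def MF_def PiE_def Pi_def)
      have "?\<Phi> a ` ?D = h ` (a ` ?D)" by auto
      also have "a ` ?D = {1..?M}" using a by (simp add: SJ_def)
      finally have im: "?\<Phi> a ` ?D = U" using him by simp
      have "?\<Phi> a \<in> MF ks {1..m}"
        unfolding MF_def
      proof (intro CollectI conjI allI impI)
        show "?\<Phi> a \<in> ?D \<rightarrow>\<^sub>E {1..m}" using am h4 U by auto
        fix j assume j: "j < length ks"
        have sm: "strict_mono_on (qblock ks j) a" using a j by (auto simp: SJ_def MF_def)
        show "strict_mono_on (qblock ks j) (?\<Phi> a)"
        proof (rule strict_mono_onI)
          fix x y assume "x \<in> qblock ks j" "y \<in> qblock ks j" "x < y"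
          then show "?\<Phi> a x < ?\<Phi> a y"
            using blocks[OF j] strict_mono_onD[OF sm] strict_mono_onD[OF hsm] am by auto
        qed
      qed
      then show "?\<Phi> a \<in> {\<pi> \<in> MF ks {1..m}. \<pi> ` ?D = U}" using im by simp
    qed
    show "?\<Psi> ` {\<pi> \<in> MF ks {1..m}. \<pi> ` ?D = U} \<subseteq> SJ ks ?M"
    proof (rule image_subsetI)
      fix a assume a: "a \<in> {\<pi> \<in> MF ks {1..m}. \<pi> ` ?D = U}"
      have am: "\<And>x. x \<in> ?D \<Longrightarrow> a x \<in> U" using a by auto
      have "?\<Psi> a ` ?D = hi ` (a ` ?D)" by auto
      also have "a ` ?D = U" using a by simp
      also have "hi ` U = {1..?M}"
      proof
        show "hi ` U \<subseteq> {1..?M}" using h3 by blast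
        show "{1..?M} \<subseteq> hi ` U" using h1 h4 by (metis image_eqI subsetI)
      qed
      finally have im: "?\<Psi> a ` ?D = {1..?M}" .
      have "?\<Psi> a \<in> MF ks {1..?M}"
        unfolding MF_def
      proof (intro CollectI conjI allI impI)
        show "?\<Psi> a \<in> ?D \<rightarrow>\<^sub>E {1..?M}" using am h3 by auto
        fix j assume j: "j < length ks"
        have sm: "strict_mono_on (qblock ks j) a" using a j by (auto simp: MF_def)
        show "strict_mono_on (qblock ks j) (?\<Psi> a)"
        proof (rule strict_mono_onI)
          fix x y assume "x \<in> qblock ks j" "y \<in> qblock ks j" "x < y"
          then show "?\<Psi> a x < ?\<Psi> a y"
            using blocks[OF j] strict_mono_onD[OF sm] strict_mono_onD[OF hism] am by auto
        qed
      qed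
      then show "?\<Psi> a \<in> SJ ks ?M" using im by (simp add: SJ_def)
    qed
  qed
  then show ?thesis by (rule bij_betw_same_card[symmetric])
qed

lemma sum_pow_card:
  fixes g :: "nat \<Rightarrow> nat"
  assumes "finite S"
  shows "(\<Sum>U\<in>Pow S. g (card U)) = (\<Sum>M\<le>card S. (card S choose M) * g M)"
proof -
  have P: "Pow S = (\<Union>M\<in>{..card S}. {U. U \<subseteq> S \<and> card U = M})"
    using assms by (auto intro: card_mono)
  have "(\<Sum>U\<in>Pow S. g (card U)) = (\<Sum>M\<le>card S. \<Sum>U\<in>{U. U \<subseteq> S \<and> card U = M}. g (card U))"
    unfolding P by (rule sum.UNION_disjoint) (use assms in auto)
  also have "\<dots> = (\<Sum>M\<le>card S. (card S choose M) * g M)"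
  proof (rule sum.cong[OF refl])
    fix M
    have "(\<Sum>U\<in>{U. U \<subseteq> S \<and> card U = M}. g (card U)) = (\<Sum>U\<in>{U. U \<subseteq> S \<and> card U = M}. g M)"
      by (rule sum.cong) auto
    then show "(\<Sum>U\<in>{U. U \<subseteq> S \<and> card U = M}. g (card U)) = (card S choose M) * g M"
      using n_subsets[OF assms, of M] by simp
  qed
  finally show ?thesis .
qed

lemma card_MF2: "card (MF ks {1..m}) = (\<Sum>M\<le>m. (m choose M) * card (SJ ks M))"
proof -
  let ?D = "{1..sum_list ks}"
  let ?F = "\<lambda>U. {\<pi> \<in> MF ks {1..m}. \<pi> ` ?D = U}"
  have fin: "finite (MF ks {1..m})"
    by (rule finite_subset[of _ "?D \<rightarrow>\<^sub>E {1..m}"]) (auto simp: MF_def intro: finite_PiE)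
  have e: "MF ks {1..m} = (\<Union>U\<in>Pow {1..m}. ?F U)"
  proof
    show "MF ks {1..m} \<subseteq> (\<Union>U\<in>Pow {1..m}. ?F U)"
    proof
      fix \<pi> assume p: "\<pi> \<in> MF ks {1..m}"
      then have "\<pi> ` ?D \<subseteq> {1..m}" unfolding MF_def by blast
      then show "\<pi> \<in> (\<Union>U\<in>Pow {1..m}. ?F U)" using p by blast
    qed
    show "(\<Union>U\<in>Pow {1..m}. ?F U) \<subseteq> MF ks {1..m}" by blast
  qed
  have "card (MF ks {1..m}) = card (\<Union>U\<in>Pow {1..m}. ?F U)" by (rule arg_cong[OF e])
  also have "\<dots> = (\<Sum>U\<in>Pow {1..m}. card (?F U))"
    by (rule card_UN_disjoint) (use fin in auto)
  also have "\<dots> = (\<Sum>U\<in>Pow {1..m}. card (SJ ks (card U)))"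
    by (rule sum.cong[OF refl], rule card_FU) auto
  also have "\<dots> = (\<Sum>M\<le>m. (m choose M) * card (SJ ks M))"
    using sum_pow_card[of "{1..m}" "\<lambda>M. card (SJ ks M)"] by simp
  finally show ?thesis .
qed

lemma SJ_empty: "sum_list ks < M \<Longrightarrow> SJ ks M = {}"
proof (rule ccontr)
  assume "sum_list ks < M" "SJ ks M \<noteq> {}"
  then obtain \<pi> where "\<pi> ` {1..sum_list ks} = {1..M}" by (auto simp: SJ_def)
  then have "card {1..M} \<le> card {1..sum_list ks}" by (metis card_image_le finite_atLeastAtMost)
  then show False using \<open>sum_list ks < M\<close> by simp
qed

lemma star: "prod_list (map (\<lambda>k. m choose k) ks) = (\<Sum>M\<le>m. (m choose M) * card (SJ ks M))"
  using card_MF card_MF2 by metis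

definition QP :: "nat list \<Rightarrow> 'a::comm_ring_1 poly" where
  "QP ks = (\<Sum>M\<le>sum_list ks. monom (of_nat (card (SJ ks M))) M)"

lemma coeff_QP: "coeff (QP ks :: 'a::comm_ring_1 poly) N = (if N \<le> sum_list ks then of_nat (card (SJ ks N)) else 0)"
proof -
  have "coeff (QP ks :: 'a poly) N = (\<Sum>M\<le>sum_list ks. if M = N then of_nat (card (SJ ks M)) else 0)"
    by (simp add: QP_def coeff_sum coeff_monom)
  also have "\<dots> = (if N \<le> sum_list ks then of_nat (card (SJ ks N)) else 0)"
    by (simp add: sum.delta')
  finally show ?thesis .
qed

lemma phi_monom_c: "phi (monom c n) m = c * of_nat (m choose n)"
  by (metis smult_monom mult.right_neutral phi_smult phi_monom)

lemma of_nat_prod_list': "of_nat (prod_list xs) = prod_list (map of_nat xs)"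
  by (induction xs) auto

lemma phi_QP: "phi (QP ks :: 'a::comm_ring_1 poly) m = prod_list (map (\<lambda>k. of_nat (m choose k)) ks)"
proof -
  let ?K = "sum_list ks"
  let ?g = "\<lambda>M. (of_nat (card (SJ ks M)) :: 'a) * of_nat (m choose M)"
  have "phi (QP ks :: 'a poly) m = (\<Sum>M\<le>?K. ?g M)"
    by (simp add: QP_def phi_sum phi_monom_c)
  also have "\<dots> = (\<Sum>M\<le>max ?K m. ?g M)"
    by (rule sum.mono_neutral_left) (auto simp: SJ_empty)
  also have "\<dots> = (\<Sum>M\<le>m. ?g M)"
    by (rule sum.mono_neutral_right) (auto, metis binomial_eq_0 not_le mult_zero_right of_nat_0)
  also have "\<dots> = of_nat (\<Sum>M\<le>m. (m choose M) * card (SJ ks M))"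
    by (simp add: mult.commute)
  also have "\<dots> = prod_list (map (\<lambda>k. of_nat (m choose k)) ks)"
    by (simp only: star[symmetric] of_nat_prod_list' map_map o_def)
  finally show ?thesis .
qed

lemma phi_foldr: "phi (foldr qshuffle ps 1) m = prod_list (map (\<lambda>p. phi p m) ps)"
  by (induction ps) (auto simp: phi_qshuffle)

lemma QP_fold: "foldr qshuffle (map (monom 1) ks) 1 = (QP ks :: 'a::comm_ring_1 poly)"
  by (rule phi_inj) (simp add: phi_foldr phi_QP phi_monom o_def)

lemma qsh_eq: "qsh ks r = (if r \<le> sum_list ks then card (SJ ks (sum_list ks - r)) else 0)"
proof -
  have "\<And>K r. {\<pi> \<in> {1..K} \<rightarrow>\<^sub>E {1..K - r}. \<pi> ` {1..K} = {1..K - r} \<and> (\<forall>j<length ks. strict_mono_on (qblock ks j) \<pi>)}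
     = {\<pi> \<in> {\<pi> \<in> {1..K} \<rightarrow>\<^sub>E {1..K - r}. \<forall>j<length ks. strict_mono_on (qblock ks j) \<pi>}. \<pi> ` {1..K} = {1..K - r}}"
    by blast
  then show ?thesis unfolding qsh_def SJ_def MF_def Let_def by presburger
qed

lemma prod_list_map_nth: "prod_list (map f xs) = (\<Prod>i<length xs. f (xs ! i))"
proof (induction xs rule: rev_induct)
  case (snoc x xs)
  have "(\<Prod>i<length (xs @ [x]). f ((xs @ [x]) ! i)) = (\<Prod>i<length xs. f ((xs @ [x]) ! i)) * f x"
    by (simp add: prod.lessThan_Suc nth_append)
  also have "(\<Prod>i<length xs. f ((xs @ [x]) ! i)) = (\<Prod>i<length xs. f (xs ! i))"
    by (rule prod.cong) (auto simp: nth_append)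
  finally show ?case using snoc by simp
qed simp

lemma sum_list_map_nth: "sum_list (map f xs) = (\<Sum>i<length xs. f (xs ! i))"
proof (induction xs rule: rev_induct)
  case (snoc x xs)
  have "(\<Sum>i<length (xs @ [x]). f ((xs @ [x]) ! i)) = (\<Sum>i<length xs. f ((xs @ [x]) ! i)) + f x"
    by (simp add: sum.lessThan_Suc nth_append)
  also have "(\<Sum>i<length xs. f ((xs @ [x]) ! i)) = (\<Sum>i<length xs. f (xs ! i))"
    by (rule sum.cong) (auto simp: nth_append)
  finally show ?case using snoc by simp
qed simp

definition KS :: "nat \<Rightarrow> (nat \<Rightarrow> nat) \<Rightarrow> nat list set" where
  "KS n d = {ks. length ks = n \<and> (\<forall>i<n. ks ! i \<le> d i)}"

lemma KS_Suc: "KS (Suc n) d = (\<lambda>(ks,k). ks @ [k]) ` (KS n d \<times> {..d n})"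
proof
  show "KS (Suc n) d \<subseteq> (\<lambda>(ks,k). ks @ [k]) ` (KS n d \<times> {..d n})"
  proof
    fix ks assume ks: "ks \<in> KS (Suc n) d"
    then have l: "length ks = Suc n" by (simp add: KS_def)
    have e: "ks = take n ks @ [ks ! n]" using l
      by (metis append_take_drop_id Cons_nth_drop_Suc lessI drop_all order_refl)
    have "take n ks \<in> KS n d" using ks l by (auto simp: KS_def)
    moreover have "ks ! n \<le> d n" using ks by (auto simp: KS_def)
    ultimately show "ks \<in> (\<lambda>(ks,k). ks @ [k]) ` (KS n d \<times> {..d n})"
      by (intro image_eqI[of _ _ "(take n ks, ks ! n)"]) (use e in auto)
  qed
  show "(\<lambda>(ks,k). ks @ [k]) ` (KS n d \<times> {..d n}) \<subseteq> KS (Suc n) d"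
    by (auto simp: KS_def nth_append less_Suc_eq)
qed

lemma DL:
  fixes f :: "nat \<Rightarrow> nat \<Rightarrow> 'a::comm_semiring_1"
  shows "(\<Prod>i<n. \<Sum>k\<le>d i. f i k) = (\<Sum>ks\<in>KS n d. \<Prod>i<n. f i (ks ! i))"
proof (induction n)
  case 0
  have "KS 0 d = {[]}" by (auto simp: KS_def)
  then show ?case by simp
next
  case (Suc n)
  have inj: "inj_on (\<lambda>(ks,k). ks @ [k]) (KS n d \<times> {..d n})"
    by (auto simp: inj_on_def)
  have "(\<Sum>ks\<in>KS (Suc n) d. \<Prod>i<Suc n. f i (ks ! i))
      = (\<Sum>p\<in>KS n d \<times> {..d n}. \<Prod>i<Suc n. f i ((case p of (ks,k) \<Rightarrow> ks @ [k]) ! i))"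
    unfolding KS_Suc by (subst sum.reindex[OF inj]) (simp add: o_def)
  also have "\<dots> = (\<Sum>p\<in>KS n d \<times> {..d n}. (case p of (ks,k) \<Rightarrow> (\<Prod>i<n. f i (ks ! i)) * f n k))"
  proof (rule sum.cong[OF refl])
    fix p assume "p \<in> KS n d \<times> {..d n}"
    then obtain ks k where p: "p = (ks,k)" and l: "length ks = n" by (auto simp: KS_def)
    have "(\<Prod>i<n. f i ((ks @ [k]) ! i)) = (\<Prod>i<n. f i (ks ! i))"
      by (rule prod.cong) (auto simp: nth_append l)
    then show "(\<Prod>i<Suc n. f i ((case p of (ks,k) \<Rightarrow> ks @ [k]) ! i)) = (case p of (ks,k) \<Rightarrow> (\<Prod>i<n. f i (ks ! i)) * f n k)"
      by (simp add: p prod.lessThan_Suc nth_append l)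
  qed
  also have "\<dots> = (\<Sum>ks\<in>KS n d. \<Sum>k\<le>d n. (\<Prod>i<n. f i (ks ! i)) * f n k)"
    by (simp add: sum.cartesian_product)
  also have "\<dots> = (\<Prod>i<Suc n. \<Sum>k\<le>d i. f i k)"
    by (simp add: Suc prod.lessThan_Suc sum_product)
  finally show ?case ..
qed

lemma degree_qmono: "degree (qmono k l :: 'a::comm_ring_1 poly) \<le> k + l"
proof (induction k l rule: qmono.induct)
  case (3 k l)
  let ?R = "qmono k (Suc l) + qmono (Suc k) l + qmono k l :: 'a poly"
  have "degree ?R \<le> Suc (k + l)"
    using 3 by (intro degree_add_le) auto
  then have "degree (pCons 0 ?R) \<le> Suc (Suc k) + l" by (simp add: degree_pCons_le)
  then show ?case by (simp only: qmono.simps times_x)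
qed (auto simp: degree_monom_le)

lemma coeff_qmono_top: "coeff (qmono k l :: 'a::comm_ring_1 poly) (k + l) = of_nat ((k + l) choose k)"
proof (induction k l rule: qmono.induct)
  case (3 k l)
  have d: "coeff (qmono k l :: 'a poly) (Suc (k + l)) = 0"
  proof (rule coeff_eq_0)
    have "degree (qmono k l :: 'a poly) \<le> k + l" by (rule degree_qmono)
    then show "degree (qmono k l :: 'a poly) < Suc (k + l)" by simp
  qed
  have "coeff (qmono (Suc k) (Suc l) :: 'a poly) (Suc k + Suc l)
      = coeff (qmono k (Suc l) + qmono (Suc k) l + qmono k l :: 'a poly) (Suc (k + l))"
    by (simp only: qmono.simps times_x) simp
  also have "\<dots> = of_nat (Suc (k + l) choose k) + of_nat (Suc (k + l) choose Suc k)"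
    using 3 d by (simp add: less_Suc_eq_le)
  also have "\<dots> = of_nat ((Suc k + Suc l) choose Suc k)"
    by (simp only: binomial_Suc_Suc[symmetric] of_nat_add[symmetric]) simp
  finally show ?case .
qed (auto simp: coeff_monom)

lemma degree_qshuffle: "degree (qshuffle p q :: 'a::comm_ring_1 poly) \<le> degree p + degree q"
  unfolding qshuffle_def
  by (intro degree_sum_le finite_atMost) (meson add_mono degree_qmono degree_smult_le order_trans atMost_iff)

lemma degree_foldr: "degree (foldr qshuffle ps 1 :: 'a::comm_ring_1 poly) \<le> sum_list (map degree ps)"
  by (induction ps) (auto intro: order_trans[OF degree_qshuffle])

lemma Lam_Node: "Lam (Node ts) = pCons 0 (foldr qshuffle (map Lam ts) 1)"
  by (simp only: Lam.simps times_x)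

lemma degree_Lam: "degree (Lam t :: 'a::comm_ring_1 poly) \<le> tsize t"
proof (induction t)
  case (Node ts)
  have "degree (foldr qshuffle (map Lam ts) 1 :: 'a poly) \<le> sum_list (map degree (map Lam ts :: 'a poly list))"
    by (rule degree_foldr)
  also have "\<dots> \<le> sum_list (map tsize ts)"
    using Node by (induction ts) (auto intro: add_mono)
  finally show ?case by (simp add: Lam_Node degree_pCons_le del: Lam.simps)
qed

lemma coeff_Lam_0: "coeff (Lam t :: 'a::comm_ring_1 poly) 0 = 0"
  by (cases t) (simp only: Lam_Node coeff_pCons_0)

lemma tsize_Node: "tsize (Node ts) = Suc (sum_list (map tsize ts))" by simp

lemma F_expand:
  fixes ts :: "tree list"
  defines "n \<equiv> length ts" and "d \<equiv> \<lambda>i. tsize (ts ! i)"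
  shows "(foldr qshuffle (map Lam ts) 1 :: 'a::comm_ring_1 poly)
     = (\<Sum>ks\<in>KS n d. smult (\<Prod>i<n. coeff (Lam (ts ! i)) (ks ! i)) (QP ks))"
proof (rule phi_inj)
  fix m
  have "phi (foldr qshuffle (map Lam ts) 1 :: 'a poly) m = (\<Prod>i<n. phi (Lam (ts ! i) :: 'a poly) m)"
    by (simp add: phi_foldr prod_list_map_nth n_def)
  also have "\<dots> = (\<Prod>i<n. \<Sum>k\<le>d i. coeff (Lam (ts ! i) :: 'a poly) k * of_nat (m choose k))"
    by (rule prod.cong[OF refl], rule phi_bound) (simp add: d_def degree_Lam)
  also have "\<dots> = (\<Sum>ks\<in>KS n d. \<Prod>i<n. coeff (Lam (ts ! i) :: 'a poly) (ks ! i) * of_nat (m choose (ks ! i)))"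
    by (rule DL)
  also have "\<dots> = phi (\<Sum>ks\<in>KS n d. smult (\<Prod>i<n. coeff (Lam (ts ! i) :: 'a poly) (ks ! i)) (QP ks)) m"
  proof -
    have "phi (\<Sum>ks\<in>KS n d. smult (\<Prod>i<n. coeff (Lam (ts ! i) :: 'a poly) (ks ! i)) (QP ks)) m
       = (\<Sum>ks\<in>KS n d. (\<Prod>i<n. coeff (Lam (ts ! i) :: 'a poly) (ks ! i)) * phi (QP ks :: 'a poly) m)"
      by (simp add: phi_sum phi_smult)
    also have "\<dots> = (\<Sum>ks\<in>KS n d. \<Prod>i<n. coeff (Lam (ts ! i) :: 'a poly) (ks ! i) * of_nat (m choose (ks ! i)))"
    proof (rule sum.cong[OF refl])
      fix ks assume "ks \<in> KS n d"
      then have l: "length ks = n" by (simp add: KS_def)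
      show "(\<Prod>i<n. coeff (Lam (ts ! i) :: 'a poly) (ks ! i)) * phi (QP ks :: 'a poly) m
         = (\<Prod>i<n. coeff (Lam (ts ! i) :: 'a poly) (ks ! i) * of_nat (m choose (ks ! i)))"
        by (simp add: phi_QP prod_list_map_nth l prod.distrib)
    qed
    finally show ?thesis by simp
  qed
  finally show "phi (foldr qshuffle (map Lam ts) 1 :: 'a poly) m
     = phi (\<Sum>ks\<in>KS n d. smult (\<Prod>i<n. coeff (Lam (ts ! i) :: 'a poly) (ks ! i)) (QP ks)) m" .
qed

lemma sum_list_nth: "sum_list (xs :: nat list) = (\<Sum>i<length xs. xs ! i)"
  using sum_list_map_nth[of "\<lambda>x. x" xs] by simp

lemma main1:
  fixes ts :: "tree list" and s :: nat
  shows "(Ccoef s (Node ts) :: 'a::comm_ring_1) =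
           (\<Sum>j = 0..s. \<Sum>rs \<in> {rs. length rs = length ts \<and> sum_list rs = s - j}.
              of_nat (qsh (map (\<lambda>i. tsize (ts ! i) - rs ! i) [0..<length ts]) j) *
              (\<Prod>i < length ts. Ccoef (rs ! i) (ts ! i)))"
proof -
  define n where "n = length ts"
  define d where "d = (\<lambda>i. tsize (ts ! i))"
  define D where "D = (\<Sum>i<n. d i)"
  define ksof where "ksof = (\<lambda>rs::nat list. map (\<lambda>i. d i - rs ! i) [0..<n])"
  define g where "g = (\<lambda>rs. (of_nat (qsh (ksof rs) (s - sum_list rs)) :: 'a) * (\<Prod>i<n. Ccoef (rs ! i) (ts ! i)))"
  define B where "B = {rs. length rs = n \<and> sum_list rs \<le> s \<and> (\<forall>i<n. rs ! i < d i)}"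
  define B0 where "B0 = {rs::nat list. length rs = n \<and> sum_list rs \<le> s}"
  define A where "A = (\<lambda>j. {rs::nat list. length rs = n \<and> sum_list rs = s - j})"
  have D_eq: "sum_list (map tsize ts) = D" by (simp add: D_def d_def n_def sum_list_map_nth)
  have finB0: "finite B0"
  proof (rule finite_subset[of _ "{xs. set xs \<subseteq> {..s} \<and> length xs = n}"])
    show "B0 \<subseteq> {xs. set xs \<subseteq> {..s} \<and> length xs = n}"
      unfolding B0_def using member_le_sum_list by fastforce
  qed (rule finite_lists_length_eq, simp)
  have ksof_nth: "\<And>rs i. i < n \<Longrightarrow> ksof rs ! i = d i - rs ! i" by (simp add: ksof_def)
  have ksof_len: "\<And>rs. length (ksof rs) = n" by (simp add: ksof_def)
  have sumB: "\<And>rs. rs \<in> B \<Longrightarrow> sum_list rs \<le> D \<and> sum_list (ksof rs) = D - sum_list rs"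
  proof -
    fix rs assume rs: "rs \<in> B"
    then have l: "length rs = n" and lt: "\<And>i. i < n \<Longrightarrow> rs ! i < d i" by (auto simp: B_def)
    have sr: "sum_list rs = (\<Sum>i<n. rs ! i)" by (simp add: sum_list_nth l)
    have "sum_list rs \<le> D" unfolding sr D_def by (rule sum_mono) (simp add: lt less_imp_le)
    moreover have "sum_list (ksof rs) = (\<Sum>i<n. d i - rs ! i)"
      by (simp add: sum_list_nth ksof_len ksof_nth)
    moreover have "(\<Sum>i<n. d i - rs ! i) = D - sum_list rs"
      unfolding sr D_def by (rule sum_subtractf_nat) (simp add: lt less_imp_le)
    ultimately show "sum_list rs \<le> D \<and> sum_list (ksof rs) = D - sum_list rs" by simp
  qed
  have RHS: "(\<Sum>j = 0..s. \<Sum>rs \<in> {rs. length rs = length ts \<and> sum_list rs = s - j}.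
              (of_nat (qsh (map (\<lambda>i. tsize (ts ! i) - rs ! i) [0..<length ts]) j) :: 'a) *
              (\<Prod>i < length ts. Ccoef (rs ! i) (ts ! i))) = (\<Sum>rs\<in>B. g rs)"
  proof -
    have "(\<Sum>j = 0..s. \<Sum>rs \<in> {rs. length rs = length ts \<and> sum_list rs = s - j}.
              (of_nat (qsh (map (\<lambda>i. tsize (ts ! i) - rs ! i) [0..<length ts]) j) :: 'a) *
              (\<Prod>i < length ts. Ccoef (rs ! i) (ts ! i))) = (\<Sum>j\<in>{0..s}. \<Sum>rs\<in>A j. g rs)"
    proof (rule sum.cong[OF refl], rule sum.cong)
      fix j assume "j \<in> {0..s}"
      show "{rs. length rs = length ts \<and> sum_list rs = s - j} = A j" by (simp add: A_def n_def)
      fix rs assume "rs \<in> A j"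
      then have "s - sum_list rs = j" using \<open>j \<in> {0..s}\<close> by (auto simp: A_def)
      then show "(of_nat (qsh (map (\<lambda>i. tsize (ts ! i) - rs ! i) [0..<length ts]) j) :: 'a) *
              (\<Prod>i < length ts. Ccoef (rs ! i) (ts ! i)) = g rs"
        by (simp add: g_def ksof_def d_def n_def)
    qed
    also have "\<dots> = (\<Sum>rs\<in>(\<Union>j\<in>{0..s}. A j). g rs)"
    proof (rule sum.UNION_disjoint[symmetric])
      show "\<forall>j\<in>{0..s}. finite (A j)"
        using finB0 by (auto simp: A_def B0_def elim: finite_subset[rotated])
      show "\<forall>i\<in>{0..s}. \<forall>j\<in>{0..s}. i \<noteq> j \<longrightarrow> A i \<inter> A j = {}"
        by (auto simp: A_def)
    qed simp
    also have "(\<Union>j\<in>{0..s}. A j) = B0"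
    proof
      show "(\<Union>j\<in>{0..s}. A j) \<subseteq> B0" by (auto simp: A_def B0_def)
      show "B0 \<subseteq> (\<Union>j\<in>{0..s}. A j)"
      proof
        fix rs assume "rs \<in> B0"
        then show "rs \<in> (\<Union>j\<in>{0..s}. A j)"
          by (intro UN_I[of "s - sum_list rs"]) (auto simp: A_def B0_def)
      qed
    qed
    also have "(\<Sum>rs\<in>B0. g rs) = (\<Sum>rs\<in>B. g rs)"
    proof (rule sum.mono_neutral_right[OF finB0])
      show "B \<subseteq> B0" by (auto simp: B_def B0_def)
      show "\<forall>rs\<in>B0 - B. g rs = 0"
      proof
        fix rs assume "rs \<in> B0 - B"
        then obtain i where i: "i < n" "\<not> rs ! i < d i" by (auto simp: B_def B0_def)
        then have "Ccoef (rs ! i) (ts ! i) = (0::'a)" by (simp add: Ccoef_def d_def)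
        then have "(\<Prod>i<n. Ccoef (rs ! i) (ts ! i)) = (0::'a)" using i(1)
          by (intro prod_zero) auto
        then show "g rs = 0" by (simp add: g_def)
      qed
    qed
    finally show ?thesis .
  qed
  show ?thesis
  proof (cases "s \<le> D")
    case False
    have "Ccoef s (Node ts) = (0::'a)" using False by (simp add: Ccoef_def D_eq)
    moreover have "(\<Sum>rs\<in>B. g rs) = 0"
    proof (rule sum.neutral, rule ballI)
      fix rs assume rs: "rs \<in> B"
      have "sum_list rs \<le> s" using rs by (simp add: B_def)
      then have "\<not> s - sum_list rs \<le> sum_list (ksof rs)" using sumB[OF rs] False by arith
      then show "g rs = 0" by (simp add: g_def qsh_eq)
    qed
    ultimately show ?thesis using RHS by simp
  next
    case True
    define F where "F = (foldr qshuffle (map Lam ts) 1 :: 'a poly)"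
    define c where "c = (\<lambda>i k. coeff (Lam (ts ! i) :: 'a poly) k)"
    define P where "P = (\<lambda>ks. \<Prod>i<n. c i (ks ! i))"
    define KS' where "KS' = {ks \<in> KS n d. (\<forall>i<n. 1 \<le> ks ! i) \<and> D - s \<le> sum_list ks}"
    have "Ccoef s (Node ts) = coeff F (D - s)"
      using True by (simp add: Ccoef_def D_eq Lam_Node F_def Suc_diff_le del: Lam.simps)
    also have "\<dots> = (\<Sum>ks\<in>KS n d. P ks * coeff (QP ks :: 'a poly) (D - s))"
      unfolding F_def F_expand[where 'a='a] by (simp add: coeff_sum P_def c_def n_def d_def)
    also have "\<dots> = (\<Sum>ks\<in>KS'. P ks * of_nat (card (SJ ks (D - s))))"
    proof -
      have finKS: "finite (KS n d)"
      proof (rule finite_subset[of _ "{xs. set xs \<subseteq> {..D} \<and> length xs = n}"])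
        show "KS n d \<subseteq> {xs. set xs \<subseteq> {..D} \<and> length xs = n}"
        proof (clarify, intro conjI)
          fix ks assume ks: "ks \<in> KS n d"
          show "length ks = n" using ks by (simp add: KS_def)
          show "set ks \<subseteq> {..D}"
          proof
            fix x assume "x \<in> set ks"
            then obtain i where i: "i < n" "x = ks ! i" using ks by (auto simp: KS_def in_set_conv_nth)
            have "d i \<le> D" unfolding D_def using i(1) by (intro member_le_sum) auto
            then show "x \<in> {..D}" using ks i by (auto simp: KS_def)
          qed
        qed
      qed (rule finite_lists_length_eq, simp)
      have "(\<Sum>ks\<in>KS n d. P ks * coeff (QP ks :: 'a poly) (D - s)) = (\<Sum>ks\<in>KS'. P ks * coeff (QP ks :: 'a poly) (D - s))"
      proof (rule sum.mono_neutral_right[OF finKS])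
        show "KS' \<subseteq> KS n d" by (auto simp: KS'_def)
        show "\<forall>ks\<in>KS n d - KS'. P ks * coeff (QP ks :: 'a poly) (D - s) = 0"
        proof
          fix ks assume ks: "ks \<in> KS n d - KS'"
          show "P ks * coeff (QP ks :: 'a poly) (D - s) = 0"
          proof (cases "\<forall>i<n. 1 \<le> ks ! i")
            case True
            then have "\<not> D - s \<le> sum_list ks" using ks by (auto simp: KS'_def)
            then show ?thesis by (simp add: coeff_QP)
          next
            case False
            then obtain i where i: "i < n" "ks ! i = 0" by auto
            have "P ks = 0" unfolding P_def using i
              by (intro prod_zero) (auto simp: c_def coeff_Lam_0 intro!: bexI[of _ i])
            then show ?thesis by simp
          qed
        qed
      qed
      also have "\<dots> = (\<Sum>ks\<in>KS'. P ks * of_nat (card (SJ ks (D - s))))"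
        by (rule sum.cong[OF refl]) (auto simp: KS'_def coeff_QP)
      finally show ?thesis .
    qed
    also have "\<dots> = (\<Sum>rs\<in>B. g rs)"
    proof (rule sum.reindex_bij_witness[where i = ksof and j = ksof, symmetric])
      fix rs assume rs: "rs \<in> B"
      have l: "length rs = n" and lt: "\<And>i. i < n \<Longrightarrow> rs ! i < d i" using rs by (auto simp: B_def)
      have sb: "sum_list rs \<le> D" "sum_list (ksof rs) = D - sum_list rs" using sumB[OF rs] by auto
      have ss: "sum_list rs \<le> s" using rs by (simp add: B_def)
      show "ksof (ksof rs) = rs"
        by (rule nth_equalityI) (auto simp: ksof_len l ksof_nth lt less_imp_le)
      show "ksof rs \<in> KS'"
        unfolding KS'_def KS_def using sb ss lt by (auto simp: ksof_len ksof_nth Suc_le_eq)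
      have "qsh (ksof rs) (s - sum_list rs) = card (SJ (ksof rs) (D - s))"
        using sb ss True by (simp add: qsh_eq)
      moreover have "(\<Prod>i<n. Ccoef (rs ! i) (ts ! i)) = (P (ksof rs) :: 'a)"
        unfolding P_def by (rule prod.cong[OF refl]) (simp add: Ccoef_def ksof_nth lt[unfolded d_def] c_def d_def)
      ultimately show "P (ksof rs) * of_nat (card (SJ (ksof rs) (D - s))) = g rs"
        by (simp add: g_def mult.commute)
    next
      fix ks assume ks: "ks \<in> KS'"
      have l: "length ks = n" and le: "\<And>i. i < n \<Longrightarrow> ks ! i \<le> d i" and ge: "\<And>i. i < n \<Longrightarrow> 1 \<le> ks ! i"
        and Ns: "D - s \<le> sum_list ks" using ks by (auto simp: KS'_def KS_def)
      show "ksof (ksof ks) = ks"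
        by (rule nth_equalityI) (auto simp: ksof_len l ksof_nth le)
      have sk: "sum_list ks = (\<Sum>i<n. ks ! i)" by (simp add: sum_list_nth l)
      have "sum_list (ksof ks) = (\<Sum>i<n. d i - ks ! i)"
        by (simp add: sum_list_nth ksof_len ksof_nth)
      also have "\<dots> = D - sum_list ks"
        unfolding sk D_def by (rule sum_subtractf_nat) (simp add: le)
      finally have "sum_list (ksof ks) \<le> s" using Ns by simp
      moreover have "\<forall>i<n. ksof ks ! i < d i"
      proof (intro allI impI)
        fix i assume i: "i < n"
        then have "1 \<le> ks ! i" "ks ! i \<le> d i" using ge le by auto
        then show "ksof ks ! i < d i" using i by (simp add: ksof_nth)
      qed
      ultimately show "ksof ks \<in> B" by (simp add: B_def ksof_len)
    qed
    finally show ?thesis using RHS by simp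
  qed
qed

lemma qshuffle_one: "qshuffle p 1 = (p :: 'a::comm_ring_1 poly)"
  by (rule phi_inj) (simp add: phi_qshuffle)

lemma Lam_ladder: "1 \<le> k \<Longrightarrow> Lam (ladder k) = (monom 1 k :: 'a::comm_ring_1 poly)"
proof (induction k rule: ladder.induct)
  case 2
  show ?case by (simp only: ladder.simps Lam_Node) (simp add: monom_Suc monom_eq_1)
next
  case (3 n)
  have "Lam (ladder (Suc n)) = (monom 1 (Suc n) :: 'a poly)" using 3 by simp
  then show ?case by (simp only: ladder.simps Lam_Node) (simp add: qshuffle_one monom_Suc[of _ "Suc n"])
qed simp

lemma tsize_ladder: "1 \<le> k \<Longrightarrow> tsize (ladder k) = k"
  by (induction k rule: ladder.induct) auto

lemma part3:
  assumes "\<forall>k \<in> set ks. 1 \<le> k"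
  shows "(Ccoef s (Node (map ladder ks)) :: 'a::comm_ring_1) = of_nat (qsh ks s)"
proof -
  have m1: "map Lam (map ladder ks) = (map (monom 1) ks :: 'a poly list)"
    using assms by (auto simp: Lam_ladder)
  have m2: "map tsize (map ladder ks) = ks"
    using assms by (induction ks) (auto simp: tsize_ladder)
  have L: "(Lam (Node (map ladder ks)) :: 'a poly) = pCons 0 (QP ks)"
    by (simp only: Lam_Node m1 QP_fold)
  show ?thesis
  proof (cases "s \<le> sum_list ks")
    case True
    then show ?thesis unfolding Ccoef_def L tsize_Node m2
      by (simp add: Suc_diff_le coeff_QP qsh_eq)
  next
    case False
    then show ?thesis unfolding Ccoef_def L tsize_Node m2
      by (simp add: qsh_eq)
  qed
qed

lemma sum_single: "finite A \<Longrightarrow> a \<in> A \<Longrightarrow> (\<And>x. x \<in> A \<Longrightarrow> x \<noteq> a \<Longrightarrow> f x = 0) \<Longrightarrow> sum f A = f a"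
  by (subst sum.remove[of A a]) (auto intro!: sum.neutral)

lemma qshuffle_bound:
  assumes "degree p \<le> Dp" "degree q \<le> Dq"
  shows "qshuffle p q = (\<Sum>i\<le>Dp. \<Sum>j\<le>Dq. smult (coeff p i * coeff q j) (qmono i j))"
proof -
  have "qshuffle p q = (\<Sum>i\<le>degree p. \<Sum>j\<le>Dq. smult (coeff p i * coeff q j) (qmono i j))"
    unfolding qshuffle_def
    by (rule sum.cong[OF refl], rule sum.mono_neutral_left) (use assms in \<open>auto simp: coeff_eq_0\<close>)
  also have "\<dots> = (\<Sum>i\<le>Dp. \<Sum>j\<le>Dq. smult (coeff p i * coeff q j) (qmono i j))"
    by (rule sum.mono_neutral_left) (use assms in \<open>auto simp: coeff_eq_0\<close>)
  finally show ?thesis .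
qed

lemma qsh_nil0: "qsh [] 0 = 1"
proof -
  have "(QP [] :: int poly) = 1" using QP_fold[of "[]"] by simp
  then have "coeff (QP [] :: int poly) 0 = 1" by simp
  then show ?thesis by (simp add: coeff_QP qsh_eq)
qed

lemma qsh_cons0: "qsh (k # ks) 0 = ((k + sum_list ks) choose k) * qsh ks 0"
proof -
  let ?K = "sum_list ks"
  define Q where "Q = (QP ks :: int poly)"
  have QP: "(QP (k # ks) :: int poly) = qshuffle (monom 1 k) Q"
    unfolding Q_def using QP_fold[of "k # ks", where 'a=int] QP_fold[of ks, where 'a=int] by simp
  have dQ: "degree Q \<le> ?K" unfolding Q_def by (rule degree_le) (simp add: coeff_QP)
  have "coeff (QP (k # ks) :: int poly) (k + ?K) = of_nat (qsh (k # ks) 0)"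
    by (simp add: coeff_QP qsh_eq)
  moreover have "coeff (QP (k # ks) :: int poly) (k + ?K) = of_nat ((k + ?K) choose k) * of_nat (qsh ks 0)"
  proof -
    have "coeff (QP (k # ks) :: int poly) (k + ?K)
       = (\<Sum>i\<le>k. \<Sum>j\<le>?K. coeff (monom 1 k) i * coeff Q j * coeff (qmono i j :: int poly) (k + ?K))"
      unfolding QP by (subst qshuffle_bound[OF _ dQ, of _ k]) (auto simp: degree_monom_le coeff_sum)
    also have "\<dots> = (\<Sum>j\<le>?K. coeff (monom 1 k) k * coeff Q j * coeff (qmono k j :: int poly) (k + ?K))"
      by (rule sum_single) (auto simp: coeff_monom)
    also have "\<dots> = coeff Q ?K * coeff (qmono k ?K :: int poly) (k + ?K)"
    proof (subst sum_single)
      show "coeff (monom 1 k) k * coeff Q j * coeff (qmono k j :: int poly) (k + ?K) = 0"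
        if "j \<in> {..?K}" "j \<noteq> ?K" for j
      proof -
        have "degree (qmono k j :: int poly) \<le> k + j" by (rule degree_qmono)
        then have "coeff (qmono k j :: int poly) (k + ?K) = 0" using that by (intro coeff_eq_0) auto
        then show ?thesis by simp
      qed
    qed auto
    also have "\<dots> = of_nat ((k + ?K) choose k) * of_nat (qsh ks 0)"
      by (simp add: coeff_qmono_top Q_def coeff_QP qsh_eq)
    finally show ?thesis .
  qed
  ultimately have "(of_nat (qsh (k # ks) 0) :: int) = of_nat (((k + ?K) choose k) * qsh ks 0)" by simp
  then show ?thesis by (simp only: of_nat_eq_iff)
qed

lemma qsh_multinomial: "qsh ks 0 * prod_list (map fact ks) = fact (sum_list ks)"
proof (induction ks)
  case Nil then show ?case by (simp add: qsh_nil0)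
next
  case (Cons k ks)
  have "qsh (k # ks) 0 * prod_list (map fact (k # ks))
      = fact k * (qsh ks 0 * prod_list (map fact ks)) * ((k + sum_list ks) choose k)"
    by (simp add: qsh_cons0 ac_simps)
  also have "\<dots> = fact k * fact (k + sum_list ks - k) * ((k + sum_list ks) choose k)"
    using Cons by simp
  also have "\<dots> = fact (k + sum_list ks)" by (rule binomial_fact_lemma) simp
  finally show ?case by simp
qed

lemma sum_sing: "sum f {x} = f x" by simp

lemma C0_Node:
  "(Ccoef 0 (Node ts) :: 'a::comm_ring_1) = of_nat (qsh (map tsize ts) 0) * (\<Prod>i<length ts. Ccoef 0 (ts ! i))"
proof -
  let ?n = "length ts"
  have S: "{rs::nat list. length rs = ?n \<and> sum_list rs = 0 - 0} = {replicate ?n 0}"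
  proof
    show "{rs::nat list. length rs = ?n \<and> sum_list rs = 0 - 0} \<subseteq> {replicate ?n 0}"
    proof
      fix rs :: "nat list" assume "rs \<in> {rs. length rs = ?n \<and> sum_list rs = 0 - 0}"
      then have "length rs = ?n" "\<forall>x\<in>set rs. x = 0" by (auto simp: sum_list_eq_0_iff)
      then show "rs \<in> {replicate ?n 0}" using replicate_length_same[of rs 0] by simp
    qed
  qed auto
  have M: "map (\<lambda>i. tsize (ts ! i) - replicate ?n 0 ! i) [0..<?n] = map tsize ts"
    by (rule nth_equalityI) auto
  have "(Ccoef 0 (Node ts) :: 'a) = (\<Sum>rs\<in>{rs::nat list. length rs = ?n \<and> sum_list rs = 0 - 0}.
       of_nat (qsh (map (\<lambda>i. tsize (ts ! i) - rs ! i) [0..<?n]) 0) * (\<Prod>i<?n. Ccoef (rs ! i) (ts ! i)))"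
    using main1[of 0 ts, where 'a='a] by (simp only: atLeastAtMost_singleton sum_sing)
  also have "\<dots> = of_nat (qsh (map (\<lambda>i. tsize (ts ! i) - replicate ?n 0 ! i) [0..<?n]) 0)
       * (\<Prod>i<?n. Ccoef (replicate ?n 0 ! i) (ts ! i))"
    by (simp only: S sum_sing)
  also have "\<dots> = of_nat (qsh (map tsize ts) 0) * (\<Prod>i<length ts. Ccoef 0 (ts ! i))"
  proof -
    have "(\<Prod>i<?n. Ccoef (replicate ?n 0 ! i) (ts ! i)) = (\<Prod>i<?n. (Ccoef 0 (ts ! i) :: 'a))"
      by (rule prod.cong) auto
    then show ?thesis by (simp only: M)
  qed
  finally show ?thesis .
qed

lemma prod_list_pos: "(\<forall>x\<in>set xs. 0 < (x::nat)) \<Longrightarrow> 0 < prod_list xs"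
  by (induction xs) auto

lemma tfact_pos: "0 < tfact t"
proof (induction t)
  case (Node ts)
  have "0 < prod_list (map tfact ts)" using Node by (intro prod_list_pos) auto
  then show ?case by simp
qed

lemma C0: "(Ccoef 0 t :: 'a::comm_ring_1) * of_nat (tfact t) = of_nat (fact (tsize t))"
proof (induction t)
  case (Node ts)
  let ?n = "length ts"
  let ?D = "sum_list (map tsize ts)"
  have IH: "\<And>i. i < ?n \<Longrightarrow> (Ccoef 0 (ts ! i) :: 'a) * of_nat (tfact (ts ! i)) = of_nat (fact (tsize (ts ! i)))"
    using Node by auto
  have "(Ccoef 0 (Node ts) :: 'a) * of_nat (tfact (Node ts))
      = of_nat (qsh (map tsize ts) 0) * (\<Prod>i<?n. Ccoef 0 (ts ! i) * of_nat (tfact (ts ! i))) * of_nat (Suc ?D)"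
  proof -
    have t: "(of_nat (tfact (Node ts)) :: 'a) = of_nat (Suc ?D) * (\<Prod>i<?n. of_nat (tfact (ts ! i)))"
      by (simp only: tfact.simps tsize_Node prod_list_map_nth of_nat_mult of_nat_prod)
    show ?thesis unfolding t C0_Node prod.distrib by (simp only: ac_simps)
  qed
  also have "\<dots> = of_nat (qsh (map tsize ts) 0) * (\<Prod>i<?n. of_nat (fact (tsize (ts ! i)))) * of_nat (Suc ?D)"
    by (simp add: IH)
  also have "\<dots> = of_nat (qsh (map tsize ts) 0 * prod_list (map fact (map tsize ts)) * Suc ?D)"
    by (simp add: prod_list_map_nth algebra_simps)
  also have "\<dots> = of_nat (fact (Suc ?D))" by (simp only: qsh_multinomial) simp
  finally show ?case by simp
qed

theorem mainTheorem19:
  fixes ts :: "tree list" and s :: nat and ks :: "nat list"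
  shows "(Ccoef s (Node ts) :: 'a::field_char_0) =
           (\<Sum>j = 0..s. \<Sum>rs \<in> {rs. length rs = length ts \<and> sum_list rs = s - j}.
              of_nat (qsh (map (\<lambda>i. tsize (ts ! i) - rs ! i) [0..<length ts]) j) *
              (\<Prod>i < length ts. Ccoef (rs ! i) (ts ! i)))
       \<and> (Ccoef 0 (Node ts) :: 'a) = of_nat (fact (tsize (Node ts))) / of_nat (tfact (Node ts))
       \<and> ((\<forall>k \<in> set ks. 1 \<le> k) \<longrightarrow>
            (Ccoef s (Node (map ladder ks)) :: 'a) = of_nat (qsh ks s))"
proof (intro conjI impI)
  show "(Ccoef s (Node ts) :: 'a) =
           (\<Sum>j = 0..s. \<Sum>rs \<in> {rs. length rs = length ts \<and> sum_list rs = s - j}.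
              of_nat (qsh (map (\<lambda>i. tsize (ts ! i) - rs ! i) [0..<length ts]) j) *
              (\<Prod>i < length ts. Ccoef (rs ! i) (ts ! i)))" by (rule main1)
  have "(of_nat (tfact (Node ts)) :: 'a) \<noteq> 0" using tfact_pos[of "Node ts"] by (simp only: of_nat_eq_0_iff)
  then show "(Ccoef 0 (Node ts) :: 'a) = of_nat (fact (tsize (Node ts))) / of_nat (tfact (Node ts))"
    using C0[of "Node ts", where 'a='a] by (simp add: eq_divide_eq)
  show "(Ccoef s (Node (map ladder ks)) :: 'a) = of_nat (qsh ks s)" if "\<forall>k \<in> set ks. 1 \<le> k"
    using that by (rule part3)
qed

end
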